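(* Let $a_1<a_2$ be positive integers and let $g=\gcd(a_1,a_2)$. For generic $(c_1,c_2)\in\mathbb{C}^2$, the number of common solutions $(x_1,x_2)\in\mathbb{C}^2$ of the equations $x_1^{a_1}+x_2^{a_1}=c_1$ and $x_1^{a_2}+x_2^{a_2}=c_2$ equals $a_1(a_2-g)$ if both $a_1/g$ and $a_2/g$ are odd, and equals $a_1a_2$ otherwise. *)

theory Defs
  imports Complex_Main "HOL-Computational_Algebra.Polynomial"
begin

(* A bivariate complex polynomial is represented as a polynomial with polynomial
   coefficients, Q :: complex poly poly; its value at (c1,c2) is obtained by
   evaluating the outer variable at c2 and the inner variable at c1. *)
definition eval2 :: "complex poly poly \<Rightarrow> complex \<Rightarrow> complex \<Rightarrow> complex" where
  "eval2 Q c1 c2 = poly (poly Q [:c2:]) c1"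

(* A property holds for generic (c1,c2) in C^2 iff it holds on a nonempty
   Zariski-open set, i.e. outside the zero locus of some nonzero polynomial. *)
definition generic2 :: "(complex \<Rightarrow> complex \<Rightarrow> bool) \<Rightarrow> bool" where
  "generic2 P \<longleftrightarrow> (\<exists>Q :: complex poly poly. Q \<noteq> 0 \<and>
      (\<forall>c1 c2. eval2 Q c1 c2 \<noteq> 0 \<longrightarrow> P c1 c2))"

end

theory Submission
  imports Defs "HOL-Computational_Algebra.Fundamental_Theorem_Algebra"
begin


lemma card_roots_rsquarefree:
  fixes p :: "complex poly"
  assumes "rsquarefree p"
  shows "card {z. poly p z = 0} = degree p"
proof -
  have p0: "p \<noteq> 0" using assms by (simp add: rsquarefree_def)
  have fin: "finite {z. poly p z = 0}" using p0 by (rule poly_roots_finite)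
  have "degree p = degree (smult (lead_coeff p) (\<Prod>z|poly p z = 0. [:-z, 1:]))"
    using complex_poly_decompose_rsquarefree[OF assms] by simp
  also have "\<dots> = degree (\<Prod>z|poly p z = 0. [:-z, 1:])" using p0 by simp
  also have "\<dots> = (\<Sum>z|poly p z = 0. degree [:-z, 1:])"
    by (rule degree_prod_eq_sum_degree) auto
  also have "\<dots> = card {z. poly p z = 0}" by simp
  finally show ?thesis by simp
qed

lemma coprime_pow_unique:
  fixes u u' :: complex
  assumes "coprime p q" "0 < p" "u ^ p = u' ^ p" "u ^ q = u' ^ q"
  shows "u = u'"
proof (cases "u = 0")
  case True
  then show ?thesis using assms by (metis power_eq_0_iff)
next
  case False
  have u': "u' \<noteq> 0" using False assms by (metis power_eq_0_iff zero_less_iff_neq_zero)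
  obtain x y where xy: "p * x = q * y + 1" using bezout_nat[of p q] assms by auto
  have "u ^ (p*x) = u ^ (q*y) * u" using xy by (simp add: power_add)
  moreover have "u' ^ (p*x) = u' ^ (q*y) * u'" using xy by (simp add: power_add)
  moreover have "u ^ (p*x) = u' ^ (p*x)" using assms by (simp add: power_mult)
  moreover have "u ^ (q*y) = u' ^ (q*y)" using assms by (simp add: power_mult)
  ultimately show ?thesis using False by (metis mult_left_cancel power_eq_0_iff)
qed

lemma coprime_pow_exists:
  fixes A B :: complex
  assumes "coprime p q" "0 < p" "A \<noteq> 0" "B \<noteq> 0" "A ^ q = B ^ p"
  shows "\<exists>u. u ^ p = A \<and> u ^ q = B"
proof -
  obtain x y where xy: "p * x = q * y + 1" using bezout_nat[of p q] assms by auto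
  define u where "u = A ^ x / B ^ y"
  have "u ^ p = A ^ (p*x) / B ^ (p*y)" unfolding u_def by (simp add: power_divide power_mult[symmetric] mult.commute)
  also have "B ^ (p*y) = A ^ (q*y)" using assms(5) by (metis power_mult)
  also have "A ^ (p*x) = A ^ (q*y) * A" using xy by (simp add: power_add)
  finally have 1: "u ^ p = A" using assms by simp
  have "u ^ q = A ^ (q*x) / B ^ (q*y)" unfolding u_def by (simp add: power_divide power_mult[symmetric] mult.commute)
  also have "A ^ (q*x) = B ^ (p*x)" using assms(5) by (metis power_mult)
  also have "B ^ (p*x) = B ^ (q*y) * B" using xy by (simp add: power_add)
  finally have 2: "u ^ q = B" using assms by simp
  from 1 2 show ?thesis by blast
qed


lemma poly_one_monom [simp]: "poly ([:1:] + monom 1 n) (x::complex) = 1 + x ^ n"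
  by (simp add: poly_monom)

lemma degree_one_monom: "0 < n \<Longrightarrow> degree ([:1:] + monom (1::complex) n) = n"
  by (simp add: degree_add_eq_right degree_monom_eq)

lemma lead_one_monom: "0 < n \<Longrightarrow> lead_coeff ([:1:] + monom (1::complex) n) = 1"
  by (cases n) (simp_all add: degree_one_monom coeff_monom)

lemma pow_pow_neg1:
  fixes \<mu> :: complex
  assumes "coprime p q" "0 < p" "\<mu> ^ p = -1" "\<mu> ^ q = -1"
  shows "\<mu> = -1 \<and> odd p \<and> odd q"
proof -
  obtain x y where xy: "p * x = q * y + 1" using bezout_nat[of p q] assms by auto
  have "\<mu> ^ (p*x) = \<mu> ^ (q*y) * \<mu>" using xy by (simp add: power_add)
  hence e: "(-1) ^ x = (-1) ^ y * \<mu>" using assms by (simp add: power_mult)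
  hence "\<mu> = 1 \<or> \<mu> = -1" by (cases "even x"; cases "even y") (auto simp: minus_equation_iff)
  moreover have "\<mu> \<noteq> 1" using assms by auto
  ultimately have m: "\<mu> = -1" by blast
  then show ?thesis using assms by (auto simp: neg_one_even_power)
qed


lemma core:
  fixes p q :: nat
  assumes p0: "0 < p" and pq: "p < q" and cop: "coprime p q"
  shows "\<exists>B. finite B \<and> (\<forall>w. w \<notin> B \<longrightarrow>
     finite {\<mu>::complex. (1+\<mu>^q)^p - w*(1+\<mu>^p)^q = 0 \<and> 1+\<mu>^p \<noteq> 0} \<and>
     card {\<mu>::complex. (1+\<mu>^q)^p - w*(1+\<mu>^p)^q = 0 \<and> 1+\<mu>^p \<noteq> 0}
        = p*q - (if odd p \<and> odd q then p else 0))"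
proof -
  define Lq where "Lq = [:1:] + monom (1::complex) q"
  define Lp where "Lp = [:1:] + monom (1::complex) p"
  define Np where "Np = Lq ^ p"
  define Dp where "Dp = Lp ^ q"
  define G where "G = (\<lambda>w. Np - smult w Dp)"
  define odd2 where "odd2 = (odd p \<and> odd q)"
  define L where "L = [:1,1::complex:]"
  define C where "C = (if odd2 then L^p else (1::complex poly))"
  define R where "R = Lq div L"
  define S where "S = Lp div L"
  have q0: "0 < q" using p0 pq by simp
  have polyG: "poly (G w) \<mu> = (1+\<mu>^q)^p - w*(1+\<mu>^p)^q" for w \<mu>
    by (simp add: G_def Np_def Dp_def Lq_def Lp_def poly_monom)
  have C0: "C \<noteq> 0" by (simp add: C_def L_def)
  have LqR: "Lq = L * R" if "odd q"
  proof -
    have "poly Lq (-1) = 0" using that by (simp add: Lq_def poly_monom)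
    hence "L dvd Lq" by (simp add: poly_eq_0_iff_dvd L_def)
    thus ?thesis unfolding R_def by (rule dvd_mult_div_cancel[symmetric])
  qed
  have LpS: "Lp = L * S" if "odd p"
  proof -
    have "poly Lp (-1) = 0" using that by (simp add: Lp_def poly_monom)
    hence "L dvd Lp" by (simp add: poly_eq_0_iff_dvd L_def)
    thus ?thesis unfolding S_def by (rule dvd_mult_div_cancel[symmetric])
  qed
  have DpS: "Dp = L^p * (L^(q-p) * S^q)" if "odd p"
  proof -
    have "Dp = L^q * S^q" unfolding Dp_def LpS[OF that] by (rule power_mult_distrib)
    also have "L^q = L^p * L^(q-p)" using pq by (simp add: power_add[symmetric])
    finally show ?thesis by (simp add: mult.assoc)
  qed
  have NpR: "Np = L^p * R^p" if "odd q"
    unfolding Np_def LqR[OF that] by (rule power_mult_distrib)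
  have Cdvd: "C dvd G w" for w
  proof (cases odd2)
    case True
    hence "C dvd Np" "C dvd Dp" using NpR DpS by (auto simp: C_def odd2_def)
    thus ?thesis unfolding G_def by (intro dvd_diff dvd_smult)
  qed (simp add: C_def)
  define P where "P = (\<lambda>w. G w div C)"
  have GP: "G w = C * P w" for w using Cdvd[of w] by (simp add: P_def)
  have degLq: "degree Lq = q" "lead_coeff Lq = 1" unfolding Lq_def
    using degree_one_monom[OF q0] lead_one_monom[OF q0] by blast+
  have degLp: "degree Lp = p" "lead_coeff Lp = 1" unfolding Lp_def
    using degree_one_monom[OF p0] lead_one_monom[OF p0] by blast+
  have Lq0: "Lq \<noteq> 0" and Lp0: "Lp \<noteq> 0" using degLq degLp by auto
  have dN: "degree Np = p*q"
    using degLq Lq0 by (simp add: Np_def degree_power_eq mult.commute)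
  have lN: "lead_coeff Np = 1" unfolding Np_def lead_coeff_power degLq(2) by simp
  have degNp: "degree Np = p*q" "coeff Np (p*q) = 1" using dN lN by simp_all
  have dD: "degree Dp = p*q"
    using degLp Lp0 by (simp add: Dp_def degree_power_eq mult.commute)
  have lD: "lead_coeff Dp = 1" unfolding Dp_def lead_coeff_power degLp(2) by simp
  have degDp: "degree Dp = p*q" "coeff Dp (p*q) = 1" using dD lD by simp_all
  have degG: "degree (G w) = p*q" "G w \<noteq> 0" if "w \<noteq> 1" for w
  proof -
    have c: "coeff (G w) (p*q) = 1 - w" by (simp add: G_def degNp degDp)
    hence "coeff (G w) (p*q) \<noteq> 0" using that by simp
    hence "p*q \<le> degree (G w)" by (rule le_degree)
    moreover have "degree (G w) \<le> p*q"
      unfolding G_def using degree_diff_le_max[of Np "smult w Dp"] degNp degDp by simp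
    ultimately show "degree (G w) = p*q" by simp
    show "G w \<noteq> 0" using c that by auto
  qed
  have degC: "degree C = (if odd2 then p else 0)"
    by (simp add: C_def L_def degree_power_eq)
  have degP: "degree (P w) = p*q - (if odd2 then p else 0)" "P w \<noteq> 0" if "w \<noteq> 1" for w
  proof -
    show P0: "P w \<noteq> 0" using degG(2)[OF that] GP by auto
    have "p*q = degree (C * P w)" using degG(1)[OF that] GP by simp
    also have "\<dots> = degree C + degree (P w)" using C0 P0 by (rule degree_mult_eq)
    finally show "degree (P w) = p*q - (if odd2 then p else 0)" using degC by simp
  qed
  have Rm1: "poly R (-1) \<noteq> 0" if "odd q"
  proof -
    have "pderiv Lq = monom (of_nat q) (q-1)"
      by (simp add: Lq_def pderiv_add pderiv_monom pderiv_pCons)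
    moreover have "pderiv Lq = L * pderiv R + R"
      unfolding LqR[OF that] pderiv_mult by (simp add: pderiv_pCons L_def)
    ultimately have "poly (monom (of_nat q) (q-1)) (-1) = poly (L * pderiv R + R) (-1 :: complex)"
      by simp
    hence "poly R (-1) = of_nat q * (-1)^(q-1)" by (simp add: poly_monom L_def)
    thus ?thesis using q0 by simp
  qed
  have Pm1: "poly (P w) (-1) \<noteq> 0" if "odd2" for w
  proof
    assume "poly (P w) (-1) = 0"
    hence "L dvd P w" by (simp add: poly_eq_0_iff_dvd L_def)
    hence "L^p * L dvd G w" using GP[of w] that by (simp add: C_def mult_dvd_mono)
    moreover have "L^p * L dvd Dp"
    proof -
      have "L dvd L^(q-p) * S^q" using pq by (simp add: dvd_mult2 dvd_power)
      thus ?thesis using DpS that odd2_def by (simp add: mult_dvd_mono)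
    qed
    ultimately have "L^p * L dvd G w + smult w Dp"
      by (simp add: dvd_add dvd_smult)
    hence "L^p * L dvd L^p * R^p"
      using NpR that by (simp add: G_def odd2_def)
    hence "L dvd R^p" by (subst (asm) dvd_times_left_cancel_iff) (auto simp: L_def)
    hence "poly (R^p) (-1) = 0" unfolding L_def by (subst poly_eq_0_iff_dvd) simp
    hence "poly R (-1) = 0" by simp
    thus False using Rm1 that odd2_def by simp
  qed
  have roots: "poly (P w) \<mu> = 0 \<longleftrightarrow> (poly (G w) \<mu> = 0 \<and> 1+\<mu>^p \<noteq> 0)" for w \<mu>
  proof
    assume h: "poly (P w) \<mu> = 0"
    show "poly (G w) \<mu> = 0 \<and> 1+\<mu>^p \<noteq> 0"
    proof
      show g: "poly (G w) \<mu> = 0" using h GP by simp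
      show "1+\<mu>^p \<noteq> 0"
      proof
        assume b: "1+\<mu>^p = 0"
        hence "(1+\<mu>^q)^p = 0" using g polyG[of w \<mu>] p0 q0 by simp
        hence "\<mu>^q = -1" by (simp add: add_eq_0_iff)
        moreover have "\<mu>^p = -1" using b by (simp add: add_eq_0_iff)
        ultimately have "\<mu> = -1 \<and> odd2" using pow_pow_neg1[OF cop p0] odd2_def by blast
        thus False using Pm1 h by auto
      qed
    qed
  next
    assume h: "poly (G w) \<mu> = 0 \<and> 1+\<mu>^p \<noteq> 0"
    have "poly C \<mu> \<noteq> 0"
    proof
      assume "poly C \<mu> = 0"
      hence "odd2" "\<mu> = -1" by (auto simp: C_def L_def add_eq_0_iff split: if_splits)
      thus False using h by (simp add: odd2_def)
    qed
    thus "poly (P w) \<mu> = 0" using h GP[of w] by simp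
  qed
  have pdG: "poly (pderiv (G w)) \<mu> = of_nat p * (1+\<mu>^q)^(p-1) * (of_nat q * \<mu>^(q-1))
      - w * (of_nat q * (1+\<mu>^p)^(q-1) * (of_nat p * \<mu>^(p-1)))" for w \<mu>
    by (simp add: G_def Np_def Dp_def Lq_def Lp_def pderiv_diff pderiv_smult pderiv_power
        pderiv_add pderiv_monom pderiv_pCons poly_monom)
  define B where "B = {0,1} \<union> (\<lambda>\<mu>::complex. (1+\<mu>^q)^p / (1+\<mu>^p)^q) ` {\<mu>. \<mu>^(p-1) = \<mu>^(q-1)}"
  have finB: "finite B"
  proof -
    let ?m = "monom (1::complex) (q-1) - monom 1 (p-1)"
    have "coeff ?m (q-1) = 1" using pq p0 by (simp add: coeff_monom)
    hence "?m \<noteq> 0" by (metis coeff_0 zero_neq_one)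
    hence "finite {\<mu>. poly ?m \<mu> = 0}" by (rule poly_roots_finite)
    moreover have "{\<mu>. poly ?m \<mu> = 0} = {\<mu>. \<mu>^(p-1) = \<mu>^(q-1)}" by (auto simp: poly_monom)
    ultimately show ?thesis by (simp add: B_def)
  qed
  have sqf: "rsquarefree (P w)" if w: "w \<notin> B" for w
    unfolding rsquarefree_roots
  proof (intro allI notI)
    fix \<mu> assume h: "poly (P w) \<mu> = 0 \<and> poly (pderiv (P w)) \<mu> = 0"
    have g: "poly (G w) \<mu> = 0" and b0: "1+\<mu>^p \<noteq> 0" using h roots by auto
    have "pderiv (G w) = pderiv C * P w + C * pderiv (P w)"
      using GP[of w] by (simp add: pderiv_mult algebra_simps)
    hence g': "poly (pderiv (G w)) \<mu> = 0" using h by simp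
    define a where "a = 1+\<mu>^q"
    define b where "b = 1+\<mu>^p"
    have e1: "a^p = w * b^q" using g polyG by (simp add: a_def b_def)
    have e2: "of_nat p * a^(p-1) * (of_nat q * \<mu>^(q-1)) = w * (of_nat q * b^(q-1) * (of_nat p * \<mu>^(p-1)))"
      using g' pdG by (simp add: a_def b_def)
    have w0: "w \<noteq> 0" using w by (simp add: B_def)
    have b00: "b \<noteq> 0" using b0 by (simp add: b_def)
    have a0: "a \<noteq> 0" using e1 w0 b00 p0 by (auto simp: zero_power)
    have "of_nat p * of_nat q * a^p * (b * \<mu>^(q-1)) = (of_nat p * a^(p-1) * (of_nat q * \<mu>^(q-1))) * a * b"
      using p0 by (cases p) (simp_all add: algebra_simps)
    also have "\<dots> = w * (of_nat q * b^(q-1) * (of_nat p * \<mu>^(p-1))) * a * b" using e2 by simp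
    also have "\<dots> = of_nat p * of_nat q * (w * b^q) * (a * \<mu>^(p-1))"
      using q0 by (cases q) (simp_all add: algebra_simps)
    also have "\<dots> = of_nat p * of_nat q * a^p * (a * \<mu>^(p-1))" using e1 by simp
    finally have "b * \<mu>^(q-1) = a * \<mu>^(p-1)" using a0 p0 q0 by simp
    hence "\<mu>^(q-1) + \<mu>^p * \<mu>^(q-1) = \<mu>^(p-1) + \<mu>^q * \<mu>^(p-1)"
      by (simp add: a_def b_def algebra_simps)
    moreover have "\<mu>^p * \<mu>^(q-1) = \<mu>^q * \<mu>^(p-1)"
      using p0 q0 by (simp add: power_add[symmetric] add.commute)
    ultimately have m: "\<mu>^(p-1) = \<mu>^(q-1)" by simp
    have "w = (1+\<mu>^q)^p / (1+\<mu>^p)^q" using e1 b00 by (simp add: a_def b_def field_simps)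
    hence "w \<in> B" using m unfolding B_def by blast
    thus False using w by simp
  qed
  show ?thesis
  proof (intro exI conjI allI impI)
    show "finite B" by (rule finB)
    fix w assume w: "w \<notin> B"
    have w1: "w \<noteq> 1" using w by (simp add: B_def)
    have eq: "{\<mu>::complex. (1+\<mu>^q)^p - w*(1+\<mu>^p)^q = 0 \<and> 1+\<mu>^p \<noteq> 0} = {\<mu>. poly (P w) \<mu> = 0}"
      using roots polyG by auto
    show "finite {\<mu>::complex. (1+\<mu>^q)^p - w*(1+\<mu>^p)^q = 0 \<and> 1+\<mu>^p \<noteq> 0}"
      unfolding eq using degP(2)[OF w1] by (rule poly_roots_finite)
    show "card {\<mu>::complex. (1+\<mu>^q)^p - w*(1+\<mu>^p)^q = 0 \<and> 1+\<mu>^p \<noteq> 0} = p*q - (if odd p \<and> odd q then p else 0)"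
      unfolding eq using card_roots_rsquarefree[OF sqf[OF w]] degP(1)[OF w1] by (simp add: odd2_def)
  qed
qed


lemma T_nonzero:
  fixes u v c1 c2 :: complex
  assumes "0 < p" "0 < q" "u^p+v^p=c1" "u^q+v^q=c2" "c1^q \<noteq> c2^p"
  shows "u \<noteq> 0 \<and> v \<noteq> 0"
proof (intro conjI notI)
  assume "u = 0"
  hence "v^p = c1" "v^q = c2" using assms by auto
  hence "c1^q = c2^p" by (metis power_mult mult.commute)
  thus False using assms by simp
next
  assume "v = 0"
  hence "u^p = c1" "u^q = c2" using assms by auto
  hence "c1^q = c2^p" by (metis power_mult mult.commute)
  thus False using assms by simp
qed

lemma layerT:
  fixes p q :: nat and c1 c2 :: complex
  assumes p0: "0<p" and pq: "p<q" and cop: "coprime p q" and c1: "c1\<noteq>0" and c2: "c2\<noteq>0"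
    and c12: "c1^q \<noteq> c2^p"
  shows "bij_betw (\<lambda>(u,v). v/u) {(u,v). u^p+v^p=c1 \<and> u^q+v^q=c2}
           {\<mu>. (1+\<mu>^q)^p - (c2^p/c1^q)*(1+\<mu>^p)^q = 0 \<and> 1+\<mu>^p \<noteq> 0}"
proof -
  have q0: "0 < q" using p0 pq by simp
  define w where "w = c2^p/c1^q"
  let ?T = "{(u,v). u^p+v^p=c1 \<and> u^q+v^q=c2}"
  let ?M = "{\<mu>::complex. (1+\<mu>^q)^p - w*(1+\<mu>^p)^q = 0 \<and> 1+\<mu>^p \<noteq> 0}"
  have key: "u^p * (1+(v/u)^p) = c1 \<and> u^q * (1+(v/u)^q) = c2 \<and> u \<noteq> 0" if "(u,v) \<in> ?T" for u v
  proof -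
    have uv: "u \<noteq> 0 \<and> v \<noteq> 0" using T_nonzero[OF p0 q0 _ _ c12] that by auto
    thus ?thesis using that by (simp add: power_divide field_simps)
  qed
  have inM: "v/u \<in> ?M" if "(u,v) \<in> ?T" for u v
  proof -
    define \<mu> where "\<mu> = v/u"
    have k: "u^p * (1+\<mu>^p) = c1" "u^q * (1+\<mu>^q) = c2" "u \<noteq> 0" using key[OF that] by (auto simp: \<mu>_def)
    have b: "1+\<mu>^p \<noteq> 0" using k c1 by auto
    have "c1^q * (1+\<mu>^q)^p = u^(p*q) * (1+\<mu>^p)^q * (1+\<mu>^q)^p"
      using k(1) by (metis power_mult power_mult_distrib)
    also have "\<dots> = c2^p * (1+\<mu>^p)^q"
      using k(2) by (metis power_mult power_mult_distrib mult.commute mult.assoc)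
    finally have "c1^q * (1+\<mu>^q)^p = c2^p * (1+\<mu>^p)^q" .
    hence "(1+\<mu>^q)^p - w*(1+\<mu>^p)^q = 0" using c1 by (simp add: w_def field_simps)
    thus ?thesis using b by (simp add: \<mu>_def)
  qed
  have inj: "inj_on (\<lambda>(u,v). v/u) ?T"
  unfolding inj_on_def
  proof (intro ballI impI)
    fix x y assume x: "x \<in> ?T" and y: "y \<in> ?T" and xy: "(\<lambda>(u,v). v/u) x = (\<lambda>(u,v). v/u) y"
    obtain u v where xd: "x = (u,v)" by (cases x)
    obtain u' v' where yd: "y = (u',v')" by (cases y)
    have t: "(u,v) \<in> ?T" "(u',v') \<in> ?T" using x y xd yd by auto
    have e: "v/u = v'/u'" using xy xd yd by simp
    have k: "u^p * (1+(v/u)^p) = c1" "u^q * (1+(v/u)^q) = c2" "u \<noteq> 0" using key[OF t(1)] by auto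
    have k': "u'^p * (1+(v/u)^p) = c1" "u'^q * (1+(v/u)^q) = c2" "u' \<noteq> 0" using key[OF t(2)] e by auto
    have n1: "1+(v/u)^p \<noteq> 0" using k c1 by auto
    have n2: "1+(v/u)^q \<noteq> 0" using k c2 by auto
    have "u^p = u'^p" using k(1) k'(1) n1 by (metis mult_right_cancel)
    moreover have "u^q = u'^q" using k(2) k'(2) n2 by (metis mult_right_cancel)
    ultimately have "u = u'" using coprime_pow_unique[OF cop p0] by blast
    thus "x = y" using e k(3) xd yd by (simp add: field_simps)
  qed
  have surj: "?M \<subseteq> (\<lambda>(u,v). v/u) ` ?T"
  proof
    fix \<mu> assume m: "\<mu> \<in> ?M"
    have b: "1+\<mu>^p \<noteq> 0" using m by simp
    have e: "(1+\<mu>^q)^p = w*(1+\<mu>^p)^q" using m by simp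
    have w0: "w \<noteq> 0" using c1 c2 by (simp add: w_def)
    have a: "1+\<mu>^q \<noteq> 0" using e w0 b p0 by (auto simp: zero_power)
    define A where "A = c1/(1+\<mu>^p)"
    define B where "B = c2/(1+\<mu>^q)"
    have A0: "A \<noteq> 0" and B0: "B \<noteq> 0" using a b c1 c2 by (auto simp: A_def B_def)
    have "A^q = B^p"
    proof -
      have "c1^q * (1+\<mu>^q)^p = c2^p * (1+\<mu>^p)^q" using e c1 by (simp add: w_def field_simps)
      thus ?thesis using a b by (simp add: A_def B_def power_divide field_simps)
    qed
    then obtain u where u: "u^p = A" "u^q = B" using coprime_pow_exists[OF cop p0 A0 B0] by blast
    have u0: "u \<noteq> 0" using u A0 p0 by (auto simp: zero_power)
    have "(u, \<mu>*u) \<in> ?T" using u a b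
      by (simp add: power_mult_distrib A_def B_def field_simps)
    moreover have "\<mu> = (\<lambda>(u,v). v/u) (u, \<mu>*u)" using u0 by simp
    ultimately show "\<mu> \<in> (\<lambda>(u,v). v/u) ` ?T" by blast
  qed
  have "bij_betw (\<lambda>(u,v). v/u) ?T ?M"
    unfolding bij_betw_def using inj surj inM by auto
  thus ?thesis by (simp add: w_def)
qed


lemma layerS:
  fixes g p q a1 a2 :: nat and c1 c2 :: complex
  assumes g0: "0<g" and p0: "0<p" and q0: "0<q" and a1: "a1 = g*p" and a2: "a2 = g*q"
    and c12: "c1^q \<noteq> c2^p"
    and finT: "finite {(u,v). u^p+v^p=c1 \<and> u^q+v^q=c2}"
  shows "finite {(x1 :: complex, x2 :: complex). x1 ^ a1 + x2 ^ a1 = c1 \<and> x1 ^ a2 + x2 ^ a2 = c2}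
    \<and> card {(x1 :: complex, x2 :: complex). x1 ^ a1 + x2 ^ a1 = c1 \<and> x1 ^ a2 + x2 ^ a2 = c2}
       = g * g * card {(u,v). u^p+v^p=c1 \<and> u^q+v^q=c2}"
proof -
  let ?T = "{(u::complex,v::complex). u^p+v^p=c1 \<and> u^q+v^q=c2}"
  let ?S = "{(x1 :: complex, x2 :: complex). x1 ^ a1 + x2 ^ a1 = c1 \<and> x1 ^ a2 + x2 ^ a2 = c2}"
  define F where "F = (\<lambda>t::complex\<times>complex. {x. x^g = fst t} \<times> {y. y^g = snd t})"
  have SU: "?S = (\<Union>t\<in>?T. F t)"
  proof (rule set_eqI)
    fix z :: "complex \<times> complex"
    obtain x y where z: "z = (x,y)" by (cases z)
    have "z \<in> ?S \<longleftrightarrow> (x^g, y^g) \<in> ?T" using z a1 a2 by (simp add: power_mult)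
    also have "\<dots> \<longleftrightarrow> z \<in> (\<Union>t\<in>?T. F t)" using z by (auto simp: F_def)
    finally show "z \<in> ?S \<longleftrightarrow> z \<in> (\<Union>t\<in>?T. F t)" .
  qed
  have cardF: "card (F t) = g * g" "finite (F t)" if "t \<in> ?T" for t
  proof -
    obtain u v where t: "t = (u,v)" by (cases t)
    have "u \<noteq> 0 \<and> v \<noteq> 0" using T_nonzero[OF p0 q0 _ _ c12] that t by auto
    hence cu: "card {x. x^g = u} = g" and cv: "card {y. y^g = v} = g"
      using card_nth_roots g0 by auto
    hence fu: "finite {x. x^g = u}" and fv: "finite {y. y^g = v}" using g0 by (auto intro: card_ge_0_finite)
    show "card (F t) = g * g" using cu cv t by (simp add: F_def card_cartesian_product)
    show "finite (F t)" using fu fv t by (simp add: F_def)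
  qed
  have disj: "\<forall>s\<in>?T. \<forall>t\<in>?T. s \<noteq> t \<longrightarrow> F s \<inter> F t = {}"
    by (auto simp: F_def)
  have fin: "finite ?S" unfolding SU using finT cardF by blast
  have "card ?S = (\<Sum>t\<in>?T. card (F t))" unfolding SU
    by (rule card_UN_disjoint) (use finT cardF disj in auto)
  also have "\<dots> = (\<Sum>t\<in>?T. g * g)" using cardF by simp
  also have "\<dots> = g * g * card ?T" by simp
  finally show ?thesis using fin by simp
qed


lemma eval2_simps:
  "eval2 (A * B) c1 c2 = eval2 A c1 c2 * eval2 B c1 c2"
  "eval2 (A - B) c1 c2 = eval2 A c1 c2 - eval2 B c1 c2"
  "eval2 (A ^ n) c1 c2 = eval2 A c1 c2 ^ n"
  "eval2 (prod f I) c1 c2 = (\<Prod>i\<in>I. eval2 (f i) c1 c2)"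
  "eval2 [:[:0,1:]:] c1 c2 = c1"
  "eval2 [:0,1:] c1 c2 = c2"
  "eval2 [:[:b:]:] c1 c2 = b"
  "eval2 0 c1 c2 = 0"
  by (simp_all add: eval2_def poly_prod)

lemma eval2_nonzero: "eval2 A c1 c2 \<noteq> 0 \<Longrightarrow> A \<noteq> 0"
  by (auto simp: eval2_simps)

theorem proposition3p3:
  fixes a1 a2 :: nat
  assumes "0 < a1" and "a1 < a2"
  defines "g \<equiv> gcd a1 a2"
  shows "generic2 (\<lambda>c1 c2.
           finite {(x1 :: complex, x2 :: complex). x1 ^ a1 + x2 ^ a1 = c1 \<and> x1 ^ a2 + x2 ^ a2 = c2} \<and>
           card {(x1 :: complex, x2 :: complex). x1 ^ a1 + x2 ^ a1 = c1 \<and> x1 ^ a2 + x2 ^ a2 = c2} =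
             (if odd (a1 div g) \<and> odd (a2 div g) then a1 * (a2 - g) else a1 * a2))"
proof -
  define p where "p = a1 div g"
  define q where "q = a2 div g"
  have g0: "0 < g" using assms by (simp add: g_def)
  have a1: "a1 = g * p" by (simp add: p_def g_def)
  have a2: "a2 = g * q" by (simp add: q_def g_def)
  have p0: "0 < p" using a1 assms(1) by (cases p) auto
  have pq: "p < q" using a1 a2 assms(2) g0 by simp
  have q0: "0 < q" using p0 pq by simp
  have cop: "coprime p q" unfolding p_def q_def g_def using assms by (intro div_gcd_coprime) simp
  obtain B where finB: "finite B" and HB: "\<And>w. w \<notin> B \<Longrightarrow>
     finite {\<mu>::complex. (1+\<mu>^q)^p - w*(1+\<mu>^p)^q = 0 \<and> 1+\<mu>^p \<noteq> 0} \<and>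
     card {\<mu>::complex. (1+\<mu>^q)^p - w*(1+\<mu>^p)^q = 0 \<and> 1+\<mu>^p \<noteq> 0}
        = p*q - (if odd p \<and> odd q then p else 0)"
    using core[OF p0 pq cop] by blast
  define X1 :: "complex poly poly" where "X1 = [:[:0,1:]:]"
  define X2 :: "complex poly poly" where "X2 = [:0,1:]"
  define Q where "Q = X1 * X2 * (X1^q - X2^p) * (\<Prod>b\<in>B. X2^p - [:[:b:]:] * X1^q)"
  have evQ: "eval2 Q c1 c2 = c1 * c2 * (c1^q - c2^p) * (\<Prod>b\<in>B. c2^p - b * c1^q)" for c1 c2
    unfolding Q_def eval2_simps(1-4) by (simp only: X1_def X2_def eval2_simps(5-7))
  have Q0: "Q \<noteq> 0"
  proof -
    have "X1 \<noteq> 0" "X2 \<noteq> 0" by (simp_all add: X1_def X2_def)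
    moreover have "X1^q - X2^p \<noteq> 0"
      by (rule eval2_nonzero[of _ 1 0]) (simp only: eval2_simps(1-3), simp add: X1_def X2_def eval2_simps p0 zero_power)
    moreover have "X2^p - [:[:b:]:] * X1^q \<noteq> 0" for b
      by (rule eval2_nonzero[of _ 0 1]) (simp only: eval2_simps(1-3), simp add: X1_def X2_def eval2_simps q0 zero_power)
    ultimately show ?thesis using finB by (simp add: Q_def)
  qed
  show ?thesis unfolding generic2_def
  proof (intro exI conjI allI impI)
    show "Q \<noteq> 0" by (rule Q0)
    fix c1 c2 assume h: "eval2 Q c1 c2 \<noteq> 0"
    have c1: "c1 \<noteq> 0" and c2: "c2 \<noteq> 0" and c12: "c1^q \<noteq> c2^p"
      and cB: "\<And>b. b \<in> B \<Longrightarrow> c2^p - b * c1^q \<noteq> 0"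
      using h finB by (auto simp: evQ)
    define w where "w = c2^p/c1^q"
    have wB: "w \<notin> B"
    proof
      assume "w \<in> B"
      hence "c2^p - w * c1^q \<noteq> 0" by (rule cB)
      thus False using c1 by (simp add: w_def)
    qed
    have bij: "bij_betw (\<lambda>(u,v). v/u) {(u,v). u^p+v^p=c1 \<and> u^q+v^q=c2}
           {\<mu>. (1+\<mu>^q)^p - w*(1+\<mu>^p)^q = 0 \<and> 1+\<mu>^p \<noteq> 0}"
      unfolding w_def by (rule layerT[OF p0 pq cop c1 c2 c12])
    have finT: "finite {(u::complex,v::complex). u^p+v^p=c1 \<and> u^q+v^q=c2}"
      using bij HB[OF wB] bij_betw_finite by blast
    have cardT: "card {(u::complex,v::complex). u^p+v^p=c1 \<and> u^q+v^q=c2} = p*q - (if odd p \<and> odd q then p else 0)"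
      using bij_betw_same_card[OF bij] HB[OF wB] by simp
    have L: "finite {(x1 :: complex, x2 :: complex). x1 ^ a1 + x2 ^ a1 = c1 \<and> x1 ^ a2 + x2 ^ a2 = c2}
    \<and> card {(x1 :: complex, x2 :: complex). x1 ^ a1 + x2 ^ a1 = c1 \<and> x1 ^ a2 + x2 ^ a2 = c2}
       = g * g * (p*q - (if odd p \<and> odd q then p else 0))"
      using layerS[OF g0 p0 q0 a1 a2 c12 finT] cardT by simp
    show "finite {(x1 :: complex, x2 :: complex). x1 ^ a1 + x2 ^ a1 = c1 \<and> x1 ^ a2 + x2 ^ a2 = c2}"
      using L by blast
    have ar: "g * g * (p*q - (if odd p \<and> odd q then p else 0)) =
       (if odd p \<and> odd q then a1 * (a2 - g) else a1 * a2)"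
      using a1 a2 by (simp add: algebra_simps diff_mult_distrib2)
    show "card {(x1 :: complex, x2 :: complex). x1 ^ a1 + x2 ^ a1 = c1 \<and> x1 ^ a2 + x2 ^ a2 = c2} =
             (if odd (a1 div g) \<and> odd (a2 div g) then a1 * (a2 - g) else a1 * a2)"
      using L ar by (simp add: p_def q_def)
  qed
qed

end
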